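(* Let $\phi:K\to L$ be a continuous surjection between compact Hausdorff spaces, and assume $\phi$ admits a regular averaging operator, i.e., a bounded linear operator $P:C(K)\to C(L)$ with $P(f\circ\phi)=f$ for all $f\in C(L)$ and $\|P\|\le1$. If $K$ has the extension property (resp. the regular extension property), then $L$ has the extension property (resp. the regular extension property).
   Context: $C(K)$ is the Banach space of real-valued continuous functions on $K$ with the supremum norm and $\mathbf 1_K$ its unit. For a closed $F\subseteq K$, an extension operator for $F$ in $K$ is a bounded linear map $E:C(F)\to C(K)$ with $E(f)|_F=f$ for all $f\in C(F)$; it is regular if $\|E\|\le1$ and $E(\mathbf 1_F)=\mathbf 1_K$. $K$ has the (regular) extension property if every nonempty closed subset of $K$ admits a (regular) extension operator in $K$. *)

theory Defs
  imports "HOL-Analysis.Analysis"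
begin

text \<open>C(X) is represented by the real-valued continuous maps on the topological
space X; functions are only ever evaluated on topspace X.\<close>

abbreviation CX :: "'a topology \<Rightarrow> ('a \<Rightarrow> real) set" where
  "CX X \<equiv> {f. continuous_map X euclideanreal f}"

definition supnorm :: "'a topology \<Rightarrow> ('a \<Rightarrow> real) \<Rightarrow> real" where
  "supnorm X f = (if topspace X = {} then 0 else (SUP x\<in>topspace X. \<bar>f x\<bar>))"

definition bounded_linear_op ::
  "'a topology \<Rightarrow> 'b topology \<Rightarrow> (('a \<Rightarrow> real) \<Rightarrow> ('b \<Rightarrow> real)) \<Rightarrow> bool" where
  "bounded_linear_op X Y T \<longleftrightarrow>
     (\<forall>f\<in>CX X. T f \<in> CX Y) \<and>
     (\<forall>f\<in>CX X. \<forall>g\<in>CX X. \<forall>y\<in>topspace Y. T (\<lambda>x. f x + g x) y = T f y + T g y) \<and>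
     (\<forall>c. \<forall>f\<in>CX X. \<forall>y\<in>topspace Y. T (\<lambda>x. c * f x) y = c * T f y) \<and>
     (\<exists>M. \<forall>f\<in>CX X. supnorm Y (T f) \<le> M * supnorm X f)"

definition norm_le_one ::
  "'a topology \<Rightarrow> 'b topology \<Rightarrow> (('a \<Rightarrow> real) \<Rightarrow> ('b \<Rightarrow> real)) \<Rightarrow> bool" where
  "norm_le_one X Y T \<longleftrightarrow> (\<forall>f\<in>CX X. supnorm Y (T f) \<le> supnorm X f)"

definition extension_operator ::
  "'a topology \<Rightarrow> 'a set \<Rightarrow> (('a \<Rightarrow> real) \<Rightarrow> ('a \<Rightarrow> real)) \<Rightarrow> bool" where
  "extension_operator K F E \<longleftrightarrow>
     bounded_linear_op (subtopology K F) K E \<and>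
     (\<forall>f\<in>CX (subtopology K F). \<forall>x\<in>F. E f x = f x)"

definition regular_extension_operator ::
  "'a topology \<Rightarrow> 'a set \<Rightarrow> (('a \<Rightarrow> real) \<Rightarrow> ('a \<Rightarrow> real)) \<Rightarrow> bool" where
  "regular_extension_operator K F E \<longleftrightarrow>
     extension_operator K F E \<and> norm_le_one (subtopology K F) K E \<and>
     (\<forall>x\<in>topspace K. E (\<lambda>_. 1) x = 1)"

definition extension_property :: "'a topology \<Rightarrow> bool" where
  "extension_property K \<longleftrightarrow>
     (\<forall>F. closedin K F \<and> F \<noteq> {} \<longrightarrow> (\<exists>E. extension_operator K F E))"

definition regular_extension_property :: "'a topology \<Rightarrow> bool" where
  "regular_extension_property K \<longleftrightarrow>
     (\<forall>F. closedin K F \<and> F \<noteq> {} \<longrightarrow> (\<exists>E. regular_extension_operator K F E))"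

definition regular_averaging_operator ::
  "'a topology \<Rightarrow> 'b topology \<Rightarrow> ('a \<Rightarrow> 'b) \<Rightarrow> (('a \<Rightarrow> real) \<Rightarrow> ('b \<Rightarrow> real)) \<Rightarrow> bool" where
  "regular_averaging_operator K L \<phi> P \<longleftrightarrow>
     bounded_linear_op K L P \<and> norm_le_one K L P \<and>
     (\<forall>f\<in>CX L. \<forall>y\<in>topspace L. P (f \<circ> \<phi>) y = f y)"

end

theory Submission
  imports Defs
begin

lemma cont_bounded:
  assumes "compact_space X" "continuous_map X euclideanreal f"
  shows "\<exists>B\<ge>0. \<forall>x\<in>topspace X. \<bar>f x\<bar> \<le> B"
proof -
  have "compactin euclideanreal (f ` topspace X)"
    using assms image_compactin compact_space_def by blast
  then have "bounded (f ` topspace X)" by (simp add: compact_imp_bounded)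
  then obtain B where "\<forall>x\<in>topspace X. norm (f x) \<le> B" by (auto simp: bounded_iff)
  then show ?thesis
    by (metis abs_ge_zero dual_order.trans linorder_linear real_norm_def)
qed

lemma supnorm_le:
  assumes "\<forall>x\<in>topspace X. \<bar>f x\<bar> \<le> B" "0 \<le> B"
  shows "supnorm X f \<le> B"
  using assms unfolding supnorm_def by (auto intro: cSUP_least)

lemma le_supnorm:
  assumes "compact_space X" "continuous_map X euclideanreal f" "x \<in> topspace X"
  shows "\<bar>f x\<bar> \<le> supnorm X f"
proof -
  obtain B where "\<forall>x\<in>topspace X. \<bar>f x\<bar> \<le> B" using cont_bounded assms by blast
  then have "bdd_above ((\<lambda>x. \<bar>f x\<bar>) ` topspace X)" by (auto intro: bdd_aboveI2)
  then show ?thesis using assms unfolding supnorm_def by (auto intro: cSUP_upper)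
qed

lemma supnorm_nonneg:
  assumes "compact_space X" "continuous_map X euclideanreal f"
  shows "0 \<le> supnorm X f"
proof (cases "topspace X = {}")
  case True then show ?thesis by (simp add: supnorm_def)
next
  case False
  then obtain x where "x \<in> topspace X" by blast
  then show ?thesis using le_supnorm[OF assms] by (meson abs_ge_zero order_trans)
qed

context
  fixes K :: "'a topology" and L :: "'b topology" and \<phi> :: "'a \<Rightarrow> 'b"
    and P :: "('a \<Rightarrow> real) \<Rightarrow> ('b \<Rightarrow> real)"
  assumes cK: "compact_space K" and cL: "compact_space L" and HL: "Hausdorff_space L"
    and phi: "continuous_map K L \<phi>"
    and RA: "regular_averaging_operator K L \<phi> P"
begin

lemma RA1: "\<forall>f\<in>CX K. P f \<in> CX L"
  using RA unfolding regular_averaging_operator_def bounded_linear_op_def by (elim conjE)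

lemma RA2: "\<forall>f\<in>CX K. \<forall>g\<in>CX K. \<forall>y\<in>topspace L. P (\<lambda>x. f x + g x) y = P f y + P g y"
  using RA unfolding regular_averaging_operator_def bounded_linear_op_def by (elim conjE)

lemma RA3: "\<forall>c. \<forall>f\<in>CX K. \<forall>y\<in>topspace L. P (\<lambda>x. c * f x) y = c * P f y"
  using RA unfolding regular_averaging_operator_def bounded_linear_op_def by (elim conjE)

lemma RA4: "norm_le_one K L P"
  using RA unfolding regular_averaging_operator_def bounded_linear_op_def by (elim conjE)

lemma RA5: "\<forall>f\<in>CX L. \<forall>y\<in>topspace L. P (f \<circ> \<phi>) y = f y"
  using RA unfolding regular_averaging_operator_def bounded_linear_op_def by (elim conjE)

lemma Pc: "f \<in> CX K \<Longrightarrow> P f \<in> CX L"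
  using RA1 by blast

lemma Padd: "f \<in> CX K \<Longrightarrow> g \<in> CX K \<Longrightarrow> y \<in> topspace L \<Longrightarrow> P (\<lambda>x. f x + g x) y = P f y + P g y"
  using RA2 by blast

lemma Pscale: "f \<in> CX K \<Longrightarrow> y \<in> topspace L \<Longrightarrow> P (\<lambda>x. c * f x) y = c * P f y"
  using RA3 by blast

lemma Pnorm: "f \<in> CX K \<Longrightarrow> supnorm L (P f) \<le> supnorm K f"
  using RA4 unfolding norm_le_one_def by blast

lemma Pavg: "u \<in> CX L \<Longrightarrow> y \<in> topspace L \<Longrightarrow> P (u \<circ> \<phi>) y = u y"
  using RA5 by blast

lemma P1: "y \<in> topspace L \<Longrightarrow> P (\<lambda>_. 1) y = 1"
proof -
  assume y: "y \<in> topspace L"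
  have "(\<lambda>_. 1::real) \<in> CX L" by simp
  then have "P ((\<lambda>_. 1::real) \<circ> \<phi>) y = 1" using Pavg y by blast
  then show ?thesis by (simp add: o_def)
qed

lemma Pconst: "y \<in> topspace L \<Longrightarrow> P (\<lambda>x. c * 1) y = c"
  using Pscale[of "\<lambda>_. 1" y c] P1 by simp

lemma Pabs: "f \<in> CX K \<Longrightarrow> y \<in> topspace L \<Longrightarrow> \<bar>P f y\<bar> \<le> supnorm K f"
  proof -
  assume a: "f \<in> CX K" "y \<in> topspace L"
  have "\<bar>P f y\<bar> \<le> supnorm L (P f)" using le_supnorm[OF cL, of "P f" y] Pc[OF a(1)] a(2) by simp
  then show ?thesis using Pnorm[OF a(1)] by linarith
qed

lemma Ppos:
  assumes f: "f \<in> CX K" and y: "y \<in> topspace L" and pos: "\<forall>x\<in>topspace K. 0 \<le> f x"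
  shows "0 \<le> P f y"
proof -
  obtain B where B: "B \<ge> 0" "\<forall>x\<in>topspace K. \<bar>f x\<bar> \<le> B" using cont_bounded[OF cK] f by auto
  define g where "g = (\<lambda>x. f x + (- B/2) * 1)"
  have gc: "g \<in> CX K" using f unfolding g_def by (auto intro!: continuous_intros)
  have "supnorm K g \<le> B/2"
    apply (rule supnorm_le) using B pos unfolding g_def by (auto simp: abs_if)
  then have "\<bar>P g y\<bar> \<le> B/2" using Pabs[OF gc y] by linarith
  moreover have "f = (\<lambda>x. g x + (B/2) * 1)" unfolding g_def by auto
  then have "P f y = P g y + B/2"
    using Padd[OF gc _ y, of "\<lambda>x. (B/2) * 1"] Pconst[OF y] by simp
  ultimately show ?thesis by linarith
qed

lemma Pmono:
  assumes f: "f \<in> CX K" and g: "g \<in> CX K" and y: "y \<in> topspace L"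
    and le: "\<forall>x\<in>topspace K. f x \<le> g x"
  shows "P f y \<le> P g y"
proof -
  define h where "h = (\<lambda>x. g x - f x)"
  have hc: "h \<in> CX K" using f g unfolding h_def by (auto intro: continuous_map_diff)
  have "g = (\<lambda>x. f x + h x)" unfolding h_def by auto
  then have "P g y = P f y + P h y" using Padd[OF f hc y] by simp
  moreover have "0 \<le> P h y" using Ppos[OF hc y] le unfolding h_def by auto
  ultimately show ?thesis by linarith
qed


lemma Pzero:
  assumes h: "h \<in> CX K" and y: "y \<in> topspace L"
    and z: "\<forall>x\<in>topspace K. \<phi> x = y \<longrightarrow> h x = 0"
  shows "P h y = 0"
proof -
  obtain B where B: "B \<ge> 0" "\<forall>x\<in>topspace K. \<bar>h x\<bar> \<le> B" using cont_bounded[OF cK] h by auto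
  have main: "\<bar>P h y\<bar> \<le> e" if e: "e > 0" for e
  proof -
    define C where "C = {x \<in> topspace K. h x \<in> {..-e} \<union> {e..}}"
    have "closedin K C" unfolding C_def
      apply (rule closedin_continuous_map_preimage)
      using h apply simp
      by (simp add: closed_closedin[symmetric] closed_Un)
    then have "compactin K C" using closedin_compact_space cK by blast
    then have "compactin L (\<phi> ` C)" using image_compactin phi by blast
    then have cC: "closedin L (\<phi> ` C)" using compactin_imp_closedin HL by blast
    have nL: "normal_space L" using compact_Hausdorff_or_regular_imp_normal_space cL HL by blast
    have cy: "closedin L {y}" by (rule closedin_t1_singleton[OF Hausdorff_imp_t1_space[OF HL] y])
    have "y \<notin> \<phi> ` C"
    proof
      assume "y \<in> \<phi> ` C"
      then obtain x where "x \<in> C" "\<phi> x = y" by auto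
      then show False using z e unfolding C_def by auto
    qed
    then have dj: "disjnt (\<phi> ` C) {y}" by (simp add: disjnt_def)
    obtain u :: "'b \<Rightarrow> real" where u: "continuous_map L (top_of_set {0..1}) u" "u ` (\<phi> ` C) \<subseteq> {0}" "u ` {y} \<subseteq> {1}"
      by (rule Urysohn_lemma[OF nL cC cy dj zero_le_one])
    have uc: "u \<in> CX L" using u(1) by (simp add: continuous_map_in_subtopology)
    have ur: "\<forall>z\<in>topspace L. 0 \<le> u z \<and> u z \<le> 1"
      using u(1) unfolding continuous_map_in_subtopology by auto
    have uy: "u y = 1" using u(3) by auto
    have upc: "u \<circ> \<phi> \<in> CX K" using continuous_map_compose[OF phi, where g=u and X''=euclideanreal] uc by (simp add: comp_def)
    define w where "w = (\<lambda>x. (e + B) * 1 + (-B) * (u \<circ> \<phi>) x)"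
    have upc': "continuous_map K euclideanreal (\<lambda>x. u (\<phi> x))" using upc by (simp add: comp_def)
    have wc: "w \<in> CX K" using upc' unfolding w_def by (auto intro!: continuous_intros)
    have bu: "continuous_map K euclideanreal (\<lambda>x. B * u (\<phi> x))" using upc' by (intro continuous_intros)
    have "P w y = P (\<lambda>x. (e + B) * 1) y + P (\<lambda>x. (-B) * (u \<circ> \<phi>) x) y"
      unfolding w_def using Padd[of "\<lambda>x. (e + B) * 1" "\<lambda>x. (-B) * (u \<circ> \<phi>) x" y] upc y
      using upc' bu by simp
    also have "\<dots> = e"
    proof -
      have s1: "P (\<lambda>x. (e + B) * 1) y = e + B" using Pconst[OF y] .
      have s2: "P (\<lambda>x. (-B) * (u \<circ> \<phi>) x) y = -B"
        using Pscale[OF upc y, of "-B"] Pavg[OF uc y] uy by simp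
      show ?thesis using s1 s2 by simp
    qed
    finally have Pw: "P w y = e" .
    have hw: "\<bar>h x\<bar> \<le> w x" if x: "x \<in> topspace K" for x
    proof -
      have px: "\<phi> x \<in> topspace L" using continuous_map_image_subset_topspace[OF phi] x by blast
      have "B * u (\<phi> x) \<le> B * 1" using ur px B(1) mult_left_mono[of "u (\<phi> x)" 1 B] by simp
      moreover have "x \<in> C \<Longrightarrow> u (\<phi> x) = 0" using u(2) by auto
      moreover have "x \<notin> C \<Longrightarrow> \<bar>h x\<bar> < e" using x unfolding C_def by auto
      moreover have "\<bar>h x\<bar> \<le> B" using B(2) x by blast
      moreover have "w x = e + B - B * u (\<phi> x)" unfolding w_def by simp
      ultimately show ?thesis using e by (cases "x \<in> C") auto
    qed
    have "P h y \<le> P w y" using Pmono[OF h wc y] hw by (simp add: abs_le_iff)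
    moreover have "P (\<lambda>x. (-1) * h x) y \<le> P w y"
      using Pmono[OF _ wc y, of "\<lambda>x. (-1) * h x"] hw h by (auto simp: abs_le_iff intro!: continuous_intros)
    moreover have "P (\<lambda>x. (-1) * h x) y = - P h y" using Pscale[OF h y, of "-1"] by simp
    ultimately show ?thesis using Pw by linarith
  qed
  show ?thesis
  proof (rule ccontr)
    assume "P h y \<noteq> 0"
    then have "\<bar>P h y\<bar> > 0" by simp
    from main[OF half_gt_zero[OF this]] show False using \<open>\<bar>P h y\<bar> > 0\<close> by linarith
  qed
qed

lemma Pcong:
  assumes a: "a \<in> CX K" and b: "b \<in> CX K" and y: "y \<in> topspace L"
    and eq: "\<forall>x\<in>topspace K. a x = b x"
  shows "P a y = P b y"
proof -
  define h where "h = (\<lambda>x. a x - b x)"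
  have hc: "h \<in> CX K" using a b unfolding h_def by (auto intro: continuous_map_diff)
  have "a = (\<lambda>x. h x + b x)" unfolding h_def by auto
  then have "P a y = P h y + P b y" using Padd[OF hc b y] by simp
  moreover have "P h y = 0" using Pzero[OF hc y] eq unfolding h_def by auto
  ultimately show ?thesis by simp
qed

end

lemma ext_L:
  fixes K :: "'a topology" and L :: "'b topology" and \<phi> :: "'a \<Rightarrow> 'b"
    and P :: "('a \<Rightarrow> real) \<Rightarrow> ('b \<Rightarrow> real)"
  assumes cK: "compact_space K" and cL: "compact_space L" and HL: "Hausdorff_space L"
    and phi: "continuous_map K L \<phi>" and sur: "\<phi> ` topspace K = topspace L"
    and RA: "regular_averaging_operator K L \<phi> P"
    and F: "closedin L F" "F \<noteq> {}"
    and EG: "extension_operator K {x \<in> topspace K. \<phi> x \<in> F} EG"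
  shows "extension_operator L F (\<lambda>f. P (EG (f \<circ> \<phi>)))
    \<and> (regular_extension_operator K {x \<in> topspace K. \<phi> x \<in> F} EG
       \<longrightarrow> regular_extension_operator L F (\<lambda>f. P (EG (f \<circ> \<phi>))))"
proof -
  define G where "G = {x \<in> topspace K. \<phi> x \<in> F}"
  note Pc = Pc[OF cK cL HL phi RA] and Padd = Padd[OF cK cL HL phi RA]
    and Pscale = Pscale[OF cK cL HL phi RA] and Pnorm = Pnorm[OF cK cL HL phi RA]
    and Pcong = Pcong[OF cK cL HL phi RA] and P1 = P1[OF cK cL HL phi RA]
    and Pconst = Pconst[OF cK cL HL phi RA]
  have EGb: "bounded_linear_op (subtopology K G) K EG"
    and EGe: "\<forall>f\<in>CX (subtopology K G). \<forall>x\<in>G. EG f x = f x"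
    using EG unfolding extension_operator_def G_def by auto
  have EG1: "\<forall>f\<in>CX (subtopology K G). EG f \<in> CX K"
    using EGb unfolding bounded_linear_op_def by (elim conjE)
  have EG2: "\<forall>f\<in>CX (subtopology K G). \<forall>g\<in>CX (subtopology K G). \<forall>y\<in>topspace K. EG (\<lambda>x. f x + g x) y = EG f y + EG g y"
    using EGb unfolding bounded_linear_op_def by (elim conjE)
  have EG3: "\<forall>c. \<forall>f\<in>CX (subtopology K G). \<forall>y\<in>topspace K. EG (\<lambda>x. c * f x) y = c * EG f y"
    using EGb unfolding bounded_linear_op_def by (elim conjE)
  have EGc: "\<And>f. f \<in> CX (subtopology K G) \<Longrightarrow> EG f \<in> CX K"
    using EG1 by blast
  have EGadd: "\<And>f g y. f \<in> CX (subtopology K G) \<Longrightarrow> g \<in> CX (subtopology K G) \<Longrightarrow> y \<in> topspace K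
     \<Longrightarrow> EG (\<lambda>x. f x + g x) y = EG f y + EG g y"
    using EG2 by blast
  have EGscale: "\<And>f c y. f \<in> CX (subtopology K G) \<Longrightarrow> y \<in> topspace K
     \<Longrightarrow> EG (\<lambda>x. c * f x) y = c * EG f y"
    using EG3 by blast
  have "\<exists>M. \<forall>f\<in>CX (subtopology K G). supnorm K (EG f) \<le> M * supnorm (subtopology K G) f"
    using EGb unfolding bounded_linear_op_def by (elim conjE)
  then obtain M where M: "\<And>f. f \<in> CX (subtopology K G) \<Longrightarrow> supnorm K (EG f) \<le> M * supnorm (subtopology K G) f"
    by blast
  have cF: "compact_space (subtopology L F)"
    using closedin_compact_space[OF cL F(1)] compact_space_subtopology by blast
  have cG: "compact_space (subtopology K G)"
  proof -
    have "closedin K G" unfolding G_def using closedin_continuous_map_preimage[OF phi F(1)] .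
    then show ?thesis using closedin_compact_space[OF cK] compact_space_subtopology by blast
  qed
  have FL: "F \<subseteq> topspace L" using F(1) closedin_subset by blast
  have comp: "f \<circ> \<phi> \<in> CX (subtopology K G)" if f: "f \<in> CX (subtopology L F)" for f
  proof -
    have "continuous_map (subtopology K G) (subtopology L F) \<phi>"
      unfolding G_def
      by (rule continuous_map_into_subtopology) (auto intro: continuous_map_from_subtopology[OF phi])
    then show ?thesis using continuous_map_compose f by blast
  qed
  have snG: "supnorm (subtopology K G) (f \<circ> \<phi>) \<le> supnorm (subtopology L F) f"
    if f: "f \<in> CX (subtopology L F)" for f
  proof (rule supnorm_le)
    show "0 \<le> supnorm (subtopology L F) f" using supnorm_nonneg[OF cF] f by blast
    show "\<forall>x\<in>topspace (subtopology K G). \<bar>(f \<circ> \<phi>) x\<bar> \<le> supnorm (subtopology L F) f"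
    proof
      fix x assume "x \<in> topspace (subtopology K G)"
      then have "\<phi> x \<in> topspace (subtopology L F)" unfolding G_def using FL by auto
      then show "\<bar>(f \<circ> \<phi>) x\<bar> \<le> supnorm (subtopology L F) f"
        using le_supnorm[OF cF] f by simp
    qed
  qed
  define E where "E = (\<lambda>f. P (EG (f \<circ> \<phi>)))"
  have Ec: "E f \<in> CX L" if "f \<in> CX (subtopology L F)" for f
    unfolding E_def using Pc EGc comp that by blast
  have Eadd: "E (\<lambda>x. f x + g x) y = E f y + E g y"
    if f: "f \<in> CX (subtopology L F)" and g: "g \<in> CX (subtopology L F)" and y: "y \<in> topspace L" for f g y
  proof -
    have e1: "(\<lambda>x. f x + g x) \<circ> \<phi> = (\<lambda>x. (f \<circ> \<phi>) x + (g \<circ> \<phi>) x)" by (simp add: o_def)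
    have "E (\<lambda>x. f x + g x) y = P (\<lambda>x. EG (f \<circ> \<phi>) x + EG (g \<circ> \<phi>) x) y"
      unfolding E_def e1
    proof (rule Pcong)
      have cf: "continuous_map (subtopology K G) euclideanreal (f \<circ> \<phi>)" using comp[OF f] by simp
      have cg: "continuous_map (subtopology K G) euclideanreal (g \<circ> \<phi>)" using comp[OF g] by simp
      have cs: "(\<lambda>x. (f \<circ> \<phi>) x + (g \<circ> \<phi>) x) \<in> CX (subtopology K G)"
        using continuous_map_add[OF cf cg] by simp
      show "EG (\<lambda>x. (f \<circ> \<phi>) x + (g \<circ> \<phi>) x) \<in> CX K" using EGc[OF cs] .
      have a1: "continuous_map K euclideanreal (EG (f \<circ> \<phi>))" using EGc[OF comp[OF f]] by simp
      have a2: "continuous_map K euclideanreal (EG (g \<circ> \<phi>))" using EGc[OF comp[OF g]] by simp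
      show "(\<lambda>x. EG (f \<circ> \<phi>) x + EG (g \<circ> \<phi>) x) \<in> CX K" using continuous_map_add[OF a1 a2] by simp
      show "y \<in> topspace L" using y .
      show "\<forall>x\<in>topspace K. EG (\<lambda>x. (f \<circ> \<phi>) x + (g \<circ> \<phi>) x) x = EG (f \<circ> \<phi>) x + EG (g \<circ> \<phi>) x"
        using EGadd[OF comp[OF f] comp[OF g]] by blast
    qed
    also have "\<dots> = E f y + E g y" unfolding E_def using Padd EGc comp f g y by blast
    finally show ?thesis .
  qed
  have Escale: "E (\<lambda>x. c * f x) y = c * E f y"
    if f: "f \<in> CX (subtopology L F)" and y: "y \<in> topspace L" for f c y
  proof -
    have e1: "(\<lambda>x. c * f x) \<circ> \<phi> = (\<lambda>x. c * (f \<circ> \<phi>) x)" by (simp add: o_def)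
    have "E (\<lambda>x. c * f x) y = P (\<lambda>x. c * EG (f \<circ> \<phi>) x) y"
      unfolding E_def e1
    proof (rule Pcong)
      have kc: "\<And>X::'a topology. continuous_map X euclideanreal (\<lambda>x. c)" by simp
      have cf: "continuous_map (subtopology K G) euclideanreal (f \<circ> \<phi>)" using comp[OF f] by simp
      have cs: "(\<lambda>x. c * (f \<circ> \<phi>) x) \<in> CX (subtopology K G)"
        using continuous_map_real_mult[OF kc cf] by simp
      show "EG (\<lambda>x. c * (f \<circ> \<phi>) x) \<in> CX K" using EGc[OF cs] .
      have a1: "continuous_map K euclideanreal (EG (f \<circ> \<phi>))" using EGc[OF comp[OF f]] by simp
      show "(\<lambda>x. c * EG (f \<circ> \<phi>) x) \<in> CX K"
        using continuous_map_real_mult[OF kc a1] by simp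
      show "y \<in> topspace L" using y .
      show "\<forall>x\<in>topspace K. EG (\<lambda>x. c * (f \<circ> \<phi>) x) x = c * EG (f \<circ> \<phi>) x"
        using EGscale[OF comp[OF f]] by blast
    qed
    also have "\<dots> = c * E f y" unfolding E_def using Pscale EGc comp f y by blast
    finally show ?thesis .
  qed
  have Ebd: "supnorm L (E f) \<le> max M 0 * supnorm (subtopology L F) f"
    if f: "f \<in> CX (subtopology L F)" for f
  proof -
    have "supnorm L (E f) \<le> supnorm K (EG (f \<circ> \<phi>))" unfolding E_def using Pnorm EGc comp f by blast
    also have "\<dots> \<le> M * supnorm (subtopology K G) (f \<circ> \<phi>)" using M comp f by blast
    also have "\<dots> \<le> max M 0 * supnorm (subtopology K G) (f \<circ> \<phi>)"
      using supnorm_nonneg[OF cG] comp[OF f] by (simp add: mult_right_mono)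
    also have "\<dots> \<le> max M 0 * supnorm (subtopology L F) f"
      using snG[OF f] by (simp add: mult_left_mono)
    finally show ?thesis .
  qed
  have Eext: "E f y = f y" if f: "f \<in> CX (subtopology L F)" and y: "y \<in> F" for f y
  proof -
    have yL: "y \<in> topspace L" using y FL by blast
    define a where "a = EG (f \<circ> \<phi>)"
    have ac: "a \<in> CX K" unfolding a_def using EGc comp f by blast
    define h where "h = (\<lambda>x. a x - f y)"
    have hc: "h \<in> CX K" unfolding h_def using ac by (auto intro!: continuous_intros)
    have "P h y = 0"
    proof (rule Pzero[OF cK cL HL phi RA hc yL], intro ballI impI)
      fix x assume x: "x \<in> topspace K" "\<phi> x = y"
      then have "x \<in> G" unfolding G_def using y by auto
      then have "a x = (f \<circ> \<phi>) x" unfolding a_def using EGe comp f by blast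
      then show "h x = 0" unfolding h_def using x by simp
    qed
    moreover have "a = (\<lambda>x. h x + (\<lambda>x. f y * 1) x)" unfolding h_def by simp
    then have "P a y = P h y + P (\<lambda>x. f y * 1) y"
      using Padd[OF hc _ yL, of "\<lambda>x. f y * 1"] by simp
    ultimately show ?thesis unfolding E_def a_def[symmetric] using Pconst[OF yL] by simp
  qed
  have b: "bounded_linear_op (subtopology L F) L E" unfolding bounded_linear_op_def
  proof (intro conjI)
    show "\<forall>f\<in>CX (subtopology L F). E f \<in> CX L" using Ec by blast
    show "\<forall>f\<in>CX (subtopology L F). \<forall>g\<in>CX (subtopology L F). \<forall>y\<in>topspace L. E (\<lambda>x. f x + g x) y = E f y + E g y"
      using Eadd by blast
    show "\<forall>c. \<forall>f\<in>CX (subtopology L F). \<forall>y\<in>topspace L. E (\<lambda>x. c * f x) y = c * E f y"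
      using Escale by blast
    show "\<exists>M. \<forall>f\<in>CX (subtopology L F). supnorm L (E f) \<le> M * supnorm (subtopology L F) f"
      using Ebd by blast
  qed
  have ext: "extension_operator L F E"
    unfolding extension_operator_def using b Eext by blast
  have r: "regular_extension_operator L F E"
    if reg: "regular_extension_operator K G EG"
  proof -
    have n1: "norm_le_one (subtopology K G) K EG" and one: "\<forall>x\<in>topspace K. EG (\<lambda>_. 1) x = 1"
      using reg unfolding regular_extension_operator_def by auto
    have "supnorm L (E f) \<le> supnorm (subtopology L F) f" if f: "f \<in> CX (subtopology L F)" for f
    proof -
      have "supnorm L (E f) \<le> supnorm K (EG (f \<circ> \<phi>))" unfolding E_def using Pnorm EGc comp f by blast
      also have "\<dots> \<le> supnorm (subtopology K G) (f \<circ> \<phi>)" using n1 comp f unfolding norm_le_one_def by blast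
      also have "\<dots> \<le> supnorm (subtopology L F) f" using snG[OF f] .
      finally show ?thesis .
    qed
    moreover have "E (\<lambda>_. 1) y = 1" if y: "y \<in> topspace L" for y
    proof -
      have o1: "(\<lambda>_. 1::real) \<circ> \<phi> = (\<lambda>_. 1)" by (simp add: o_def)
      have c1: "(\<lambda>_. 1::real) \<in> CX (subtopology K G)" by simp
      have "E (\<lambda>_. 1) y = P (\<lambda>_. 1) y" unfolding E_def o1
        by (rule Pcong) (use EGc[OF c1] y one in auto)
      then show ?thesis using P1[OF y] by simp
    qed
    ultimately show ?thesis using ext unfolding regular_extension_operator_def norm_le_one_def by blast
  qed
  show ?thesis using ext r unfolding E_def G_def by blast
qed

theorem proposition3p5:
  fixes K :: "'a topology" and L :: "'b topology" and \<phi> :: "'a \<Rightarrow> 'b"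
  assumes "compact_space K" and "Hausdorff_space K"
    and "compact_space L" and "Hausdorff_space L"
    and "continuous_map K L \<phi>" and "\<phi> ` topspace K = topspace L"
    and "\<exists>P. regular_averaging_operator K L \<phi> P"
  shows "(extension_property K \<longrightarrow> extension_property L) \<and>
         (regular_extension_property K \<longrightarrow> regular_extension_property L)"
proof -
  obtain P where RA: "regular_averaging_operator K L \<phi> P" using assms(7) by blast
  have pre: "closedin K {x \<in> topspace K. \<phi> x \<in> F} \<and> {x \<in> topspace K. \<phi> x \<in> F} \<noteq> {}"
    if F: "closedin L F" "F \<noteq> {}" for F
  proof
    show "closedin K {x \<in> topspace K. \<phi> x \<in> F}" using closedin_continuous_map_preimage[OF assms(5) F(1)] .
    obtain y where "y \<in> F" using F(2) by blast
    then have "y \<in> topspace L" using F(1) closedin_subset by blast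
    then obtain x where "x \<in> topspace K" "\<phi> x = y" using assms(6) by (metis imageE)
    then show "{x \<in> topspace K. \<phi> x \<in> F} \<noteq> {}" using \<open>y \<in> F\<close> by blast
  qed
  note X = ext_L[OF assms(1) assms(3) assms(4) assms(5) assms(6) RA]
  show ?thesis
  proof
    show "extension_property K \<longrightarrow> extension_property L"
      unfolding extension_property_def
    proof (intro impI allI)
      fix F assume h: "\<forall>F. closedin K F \<and> F \<noteq> {} \<longrightarrow> (\<exists>E. extension_operator K F E)"
        and F: "closedin L F \<and> F \<noteq> {}"
      have "\<exists>E. extension_operator K {x \<in> topspace K. \<phi> x \<in> F} E"
        using h pre[OF conjunct1[OF F] conjunct2[OF F]] by blast
      then obtain EG where "extension_operator K {x \<in> topspace K. \<phi> x \<in> F} EG" by blast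
      from conjunct1[OF X[OF conjunct1[OF F] conjunct2[OF F] this]]
      show "\<exists>E. extension_operator L F E" by blast
    qed
    show "regular_extension_property K \<longrightarrow> regular_extension_property L"
      unfolding regular_extension_property_def
    proof (intro impI allI)
      fix F assume h: "\<forall>F. closedin K F \<and> F \<noteq> {} \<longrightarrow> (\<exists>E. regular_extension_operator K F E)"
        and F: "closedin L F \<and> F \<noteq> {}"
      have "\<exists>E. regular_extension_operator K {x \<in> topspace K. \<phi> x \<in> F} E"
        using h pre[OF conjunct1[OF F] conjunct2[OF F]] by blast
      then obtain EG where EG: "regular_extension_operator K {x \<in> topspace K. \<phi> x \<in> F} EG" by blast
      then have "extension_operator K {x \<in> topspace K. \<phi> x \<in> F} EG"
        unfolding regular_extension_operator_def by (elim conjE)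
      from mp[OF conjunct2[OF X[OF conjunct1[OF F] conjunct2[OF F] this]] EG]
      show "\<exists>E. regular_extension_operator L F E" by blast
    qed
  qed
qed

end
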